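(* Let $K$, $c$, $s$ be as in the context, let $n\ge1$ and let $\gamma_1,\ldots,\gamma_n,\beta_1,\ldots,\beta_n$ be integers. For $i=1,\ldots,n$ let $B_i=\{j\in\{1,\ldots,n\}:\gamma_j=\gamma_i\}$, and let $\gamma_0=\max\{|\gamma_1|,\ldots,|\gamma_n|\}$. Let $F=(c^{s^{\gamma_1}})^{\beta_1}(c^{s^{\gamma_2}})^{\beta_2}\cdots(c^{s^{\gamma_n}})^{\beta_n}$, an element of the base group $K^{\langle s\rangle}$, regarded as a function $\langle s\rangle\to K$. If $\mu$ is an integer with $|\mu|>3\gamma_0$ and $\sum_{j\in B_i}\beta_j=0$ for $i=1,\ldots,n$, then $F(s^{\mu})=1$.
   Context: Notation: $x^y=yxy^{-1}$. For groups $A,B$, the wreath product $A\,\mathrm{Wr}\,B$ is the semidirect product $A^B\rtimes B$, where $A^B$ is the group of all functions $B\to A$ with pointwise multiplication and $B$ acts by $(bf)(x)=f(xb)$, written $f^b=bfb^{-1}$; in particular $(c^{s^{\gamma}})(s^k)=c(s^{k+\gamma})$. $H$ is a group generated by a countable set $\{a^{(1)},a^{(2)},\ldots\}$. Let $Z=\langle z\rangle$ be infinite cyclic and $b^{(i)}\in H^Z$ with $b^{(i)}(z^k)=a^{(i)}$ if $k>0$ and $1$ otherwise; $K=\langle z,b^{(i)}\ (i\in\mathbb{N})\rangle\le H\,\mathrm{Wr}\,Z$. Let $\langle s\rangle$ be infinite cyclic and $c\in K^{\langle s\rangle}$ with $c(s)=z$, $c(s^{2^i})=b^{(i)}$ for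 $i>0$, $c(s^k)=1$ otherwise; everything takes place in $K\,\mathrm{Wr}\,\langle s\rangle$. *)

theory Defs
  imports "HOL-Algebra.Algebra"
begin

text \<open>Wreath product A Wr Z of a group A with an infinite cyclic group Z = <t>,
  where t^k is represented by the integer k.  An element (f, k) stands for f t^k
  with f : Z -> A arbitrary (all functions).  Multiplication:
  (f t^k)(g t^l) = f (t^k g t^-k) t^(k+l), and (t^k g t^-k)(t^x) = g(t^(x+k)).\<close>
definition wrZ :: "('a, 'b) monoid_scheme \<Rightarrow> ((int \<Rightarrow> 'a) \<times> int) monoid" where
  "wrZ A = \<lparr> carrier = {(f, k). f \<in> UNIV \<rightarrow> carrier A},
             monoid.mult = (\<lambda>(f, k) (g, l). (\<lambda>x. f x \<otimes>\<^bsub>A\<^esub> g (x + k), k + l)),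
             one = (\<lambda>_. \<one>\<^bsub>A\<^esub>, 0) \<rparr>"

definition zgen :: "('a, 'b) monoid_scheme \<Rightarrow> (int \<Rightarrow> 'a) \<times> int" where
  "zgen H = (\<lambda>_. \<one>\<^bsub>H\<^esub>, 1)"

definition bgen :: "('a, 'b) monoid_scheme \<Rightarrow> (nat \<Rightarrow> 'a) \<Rightarrow> nat \<Rightarrow> (int \<Rightarrow> 'a) \<times> int" where
  "bgen H a i = (\<lambda>k. if k > 0 then a i else \<one>\<^bsub>H\<^esub>, 0)"

definition Kgrp :: "('a, 'b) monoid_scheme \<Rightarrow> (nat \<Rightarrow> 'a) \<Rightarrow> ((int \<Rightarrow> 'a) \<times> int) monoid" where
  "Kgrp H a = (wrZ H) \<lparr> carrier := generate (wrZ H) (insert (zgen H) (bgen H a ` {1..})) \<rparr>"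

definition cfun :: "('a, 'b) monoid_scheme \<Rightarrow> (nat \<Rightarrow> 'a) \<Rightarrow> int \<Rightarrow> (int \<Rightarrow> 'a) \<times> int" where
  "cfun H a k = (if k = 1 then zgen H
                 else if (\<exists>i::nat. i > 0 \<and> k = 2 ^ i) then bgen H a (THE i::nat. i > 0 \<and> k = 2 ^ i)
                 else \<one>\<^bsub>Kgrp H a\<^esub>)"

definition sgen :: "('a, 'b) monoid_scheme \<Rightarrow> (nat \<Rightarrow> 'a) \<Rightarrow> (int \<Rightarrow> (int \<Rightarrow> 'a) \<times> int) \<times> int" where
  "sgen H a = (\<lambda>_. \<one>\<^bsub>Kgrp H a\<^esub>, 1)"

definition celem :: "('a, 'b) monoid_scheme \<Rightarrow> (nat \<Rightarrow> 'a) \<Rightarrow> (int \<Rightarrow> (int \<Rightarrow> 'a) \<times> int) \<times> int" where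
  "celem H a = (cfun H a, 0)"

definition conjg :: "('c, 'd) monoid_scheme \<Rightarrow> 'c \<Rightarrow> 'c \<Rightarrow> 'c" where
  "conjg G x y = y \<otimes>\<^bsub>G\<^esub> x \<otimes>\<^bsub>G\<^esub> inv\<^bsub>G\<^esub> y"

definition ordprod :: "('c, 'd) monoid_scheme \<Rightarrow> 'e list \<Rightarrow> ('e \<Rightarrow> 'c) \<Rightarrow> 'c" where
  "ordprod G xs f = foldr (\<lambda>j acc. f j \<otimes>\<^bsub>G\<^esub> acc) xs \<one>\<^bsub>G\<^esub>"

end

theory Submission imports Defs begin

lemma wrZ_carrier: "(f, k) \<in> carrier (wrZ A) \<longleftrightarrow> (\<forall>x. f x \<in> carrier A)"
  by (auto simp: wrZ_def)

lemma wrZ_mult: "(f, k) \<otimes>\<^bsub>wrZ A\<^esub> (g, l) = (\<lambda>x. f x \<otimes>\<^bsub>A\<^esub> g (x + k), k + l)"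
  by (simp add: wrZ_def)

lemma wrZ_one: "\<one>\<^bsub>wrZ A\<^esub> = (\<lambda>_. \<one>\<^bsub>A\<^esub>, 0)"
  by (simp add: wrZ_def)

lemma wrZ_group:
  assumes "group A" shows "group (wrZ A)"
proof (rule groupI)
  interpret A: group A by fact
  fix x y z assume x: "x \<in> carrier (wrZ A)" and y: "y \<in> carrier (wrZ A)" and z: "z \<in> carrier (wrZ A)"
  obtain f k where xf: "x = (f,k)" by fastforce
  obtain g l where yg: "y = (g,l)" by fastforce
  obtain h m where zh: "z = (h,m)" by fastforce
  have f: "\<And>t. f t \<in> carrier A" using x xf wrZ_carrier by metis
  have g: "\<And>t. g t \<in> carrier A" using y yg wrZ_carrier by metis
  have h: "\<And>t. h t \<in> carrier A" using z zh wrZ_carrier by metis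
  show "x \<otimes>\<^bsub>wrZ A\<^esub> y \<in> carrier (wrZ A)"
    using f g by (simp add: xf yg wrZ_mult wrZ_carrier)
  show "x \<otimes>\<^bsub>wrZ A\<^esub> y \<otimes>\<^bsub>wrZ A\<^esub> z = x \<otimes>\<^bsub>wrZ A\<^esub> (y \<otimes>\<^bsub>wrZ A\<^esub> z)"
    using f g h by (simp add: xf yg zh wrZ_mult A.m_assoc add.assoc)
  show "\<one>\<^bsub>wrZ A\<^esub> \<otimes>\<^bsub>wrZ A\<^esub> x = x"
    using f by (simp add: xf wrZ_mult wrZ_one)
  show "\<exists>y\<in>carrier (wrZ A). y \<otimes>\<^bsub>wrZ A\<^esub> x = \<one>\<^bsub>wrZ A\<^esub>"
    using f by (intro bexI[of _ "(\<lambda>t. inv\<^bsub>A\<^esub> f (t - k), -k)"]) (auto simp: xf wrZ_mult wrZ_one wrZ_carrier)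
next
  interpret A: group A by fact
  show "\<one>\<^bsub>wrZ A\<^esub> \<in> carrier (wrZ A)" by (simp add: wrZ_one wrZ_carrier)
qed

lemma shift_nat_pow:
  assumes "group A" shows "(\<lambda>_. \<one>\<^bsub>A\<^esub>, 1::int) [^]\<^bsub>wrZ A\<^esub> (n::nat) = (\<lambda>_. \<one>\<^bsub>A\<^esub>, int n)"
proof -
  interpret W: group "wrZ A" by (rule wrZ_group[OF assms])
  interpret A: group A by fact
  show ?thesis by (induction n) (simp_all add: wrZ_one wrZ_mult)
qed

lemma shift_pow:
  assumes "group A" shows "(\<lambda>_. \<one>\<^bsub>A\<^esub>, 1::int) [^]\<^bsub>wrZ A\<^esub> (k::int) = (\<lambda>_. \<one>\<^bsub>A\<^esub>, k)"
proof -
  interpret W: group "wrZ A" by (rule wrZ_group[OF assms])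
  interpret A: group A by fact
  have inv: "inv\<^bsub>wrZ A\<^esub> (\<lambda>_. \<one>\<^bsub>A\<^esub>, m) = (\<lambda>_. \<one>\<^bsub>A\<^esub>, -m)" for m
    by (rule W.inv_equality) (simp_all add: wrZ_one wrZ_mult wrZ_carrier)
  show ?thesis
    by (simp add: int_pow_def2 shift_nat_pow[OF assms] inv)
qed

lemma base_nat_pow:
  assumes "group A" "\<And>x. f x \<in> carrier A"
  shows "(f, 0::int) [^]\<^bsub>wrZ A\<^esub> (n::nat) = (\<lambda>x. f x [^]\<^bsub>A\<^esub> n, 0)"
proof -
  interpret W: group "wrZ A" by (rule wrZ_group[OF assms(1)])
  interpret A: group A by fact
  show ?thesis by (induction n) (simp_all add: wrZ_one wrZ_mult)
qed

lemma base_pow: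
  assumes "group A" "\<And>x. f x \<in> carrier A"
  shows "(f, 0::int) [^]\<^bsub>wrZ A\<^esub> (b::int) = (\<lambda>x. f x [^]\<^bsub>A\<^esub> b, 0)"
proof -
  interpret W: group "wrZ A" by (rule wrZ_group[OF assms(1)])
  interpret A: group A by fact
  have inv: "inv\<^bsub>wrZ A\<^esub> (g, 0) = (\<lambda>x. inv\<^bsub>A\<^esub> g x, 0)" if g: "\<And>x. g x \<in> carrier A" for g
  proof (rule W.inv_equality)
    show "(g, 0) \<in> carrier (wrZ A)" using g by (simp only: wrZ_carrier) blast
    show "(\<lambda>x. inv\<^bsub>A\<^esub> g x, 0) \<in> carrier (wrZ A)" using g by (simp only: wrZ_carrier A.inv_closed) blast
    show "(\<lambda>x. inv\<^bsub>A\<^esub> g x, 0::int) \<otimes>\<^bsub>wrZ A\<^esub> (g, 0) = \<one>\<^bsub>wrZ A\<^esub>"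
      using g by (simp add: wrZ_mult wrZ_one)
  qed
  have c: "\<And>x. f x [^]\<^bsub>A\<^esub> (m::nat) \<in> carrier A" for m using assms(2) A.nat_pow_closed by blast
  show ?thesis
  proof (cases "b < 0")
    case True
    have "(f, 0::int) [^]\<^bsub>wrZ A\<^esub> b = inv\<^bsub>wrZ A\<^esub> ((f, 0::int) [^]\<^bsub>wrZ A\<^esub> nat (-b))"
      using True by (subst int_pow_def2) simp
    also have "\<dots> = (\<lambda>x. inv\<^bsub>A\<^esub> (f x [^]\<^bsub>A\<^esub> nat (-b)), 0)"
      by (simp only: base_nat_pow[OF assms] inv[OF c])
    also have "\<dots> = (\<lambda>x. f x [^]\<^bsub>A\<^esub> b, 0)"
      using True int_pow_def2[of A "f x" b for x] by presburger
    finally show ?thesis .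
  next
    case False
    have "(f, 0::int) [^]\<^bsub>wrZ A\<^esub> b = (f, 0::int) [^]\<^bsub>wrZ A\<^esub> nat b"
      using False by (subst int_pow_def2) simp
    also have "\<dots> = (\<lambda>x. f x [^]\<^bsub>A\<^esub> nat b, 0)"
      by (simp only: base_nat_pow[OF assms])
    also have "\<dots> = (\<lambda>x. f x [^]\<^bsub>A\<^esub> b, 0)"
      using False int_pow_def2[of A "f x" b for x] by presburger
    finally show ?thesis .
  qed
qed

lemma conj_base:
  assumes "group A" "\<And>x. f x \<in> carrier A"
  shows "conjg (wrZ A) (f, 0) ((\<lambda>_. \<one>\<^bsub>A\<^esub>, 1::int) [^]\<^bsub>wrZ A\<^esub> (g::int)) = (\<lambda>x. f (x + g), 0)"
proof -
  interpret W: group "wrZ A" by (rule wrZ_group[OF assms(1)])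
  interpret A: group A by fact
  have inv: "inv\<^bsub>wrZ A\<^esub> (\<lambda>_. \<one>\<^bsub>A\<^esub>, m) = (\<lambda>_. \<one>\<^bsub>A\<^esub>, -m)" for m
    by (rule W.inv_equality) (simp_all add: wrZ_one wrZ_mult wrZ_carrier)
  show ?thesis using assms(2)
    by (simp add: conjg_def shift_pow[OF assms(1)] inv wrZ_mult)
qed

lemma ordprod_base:
  assumes "group A" "\<And>j x. j \<in> set xs \<Longrightarrow> fst (F j) x \<in> carrier A" "\<And>j. j \<in> set xs \<Longrightarrow> snd (F j) = 0"
  shows "fst (ordprod (wrZ A) xs F) \<mu> = ordprod A xs (\<lambda>j. fst (F j) \<mu>) \<and> snd (ordprod (wrZ A) xs F) = 0"
  using assms(2,3)
proof (induction xs arbitrary: \<mu>)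
  case Nil then show ?case by (simp add: ordprod_def wrZ_one)
next
  case (Cons y ys)
  have e: "F y = (fst (F y), 0)" using Cons.prems by (metis list.set_intros(1) prod.collapse)
  have e2: "ordprod (wrZ A) ys F = (fst (ordprod (wrZ A) ys F), 0)"
    using Cons by (metis list.set_intros(2) prod.collapse)
  have "ordprod (wrZ A) (y # ys) F = F y \<otimes>\<^bsub>wrZ A\<^esub> ordprod (wrZ A) ys F"
    by (simp add: ordprod_def)
  also have "\<dots> = (\<lambda>x. fst (F y) x \<otimes>\<^bsub>A\<^esub> fst (ordprod (wrZ A) ys F) x, 0)"
    by (subst e, subst e2) (simp add: wrZ_mult)
  finally show ?case using Cons by (simp add: ordprod_def)
qed

lemma ordprod_pow:
  assumes "group A" "x \<in> carrier A"
  shows "ordprod A xs (\<lambda>j. x [^]\<^bsub>A\<^esub> (e j :: int)) = x [^]\<^bsub>A\<^esub> (\<Sum>j\<leftarrow>xs. e j)"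
proof -
  interpret A: group A by fact
  show ?thesis by (induction xs) (simp_all add: ordprod_def A.int_pow_mult[OF assms(2)])
qed


lemma cfun_pow2:
  assumes "cfun H a q \<noteq> \<one>\<^bsub>Kgrp H a\<^esub>" shows "\<exists>i::nat. q = 2 ^ i"
proof (cases "q = 1")
  case True then show ?thesis by (intro exI[of _ 0]) simp
next
  case False
  then show ?thesis using assms unfolding cfun_def by (auto split: if_splits)
qed

lemma pow2_gap:
  fixes p q :: int and M :: int
  assumes "p = 2 ^ i" "q = 2 ^ k" "p > 2 * M" "q > 2 * M" "\<bar>p - q\<bar> \<le> 2 * M"
  shows "p = q"
proof (rule ccontr)
  assume ne: "p \<noteq> q"
  have "i \<noteq> k" using ne assms by auto
  then consider "i < k" | "k < i" by linarith
  then show False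
  proof cases
    case 1
    have "(2::int) ^ k \<ge> 2 ^ (Suc i)" using 1 by (intro power_increasing) auto
    then show False using assms by auto
  next
    case 2
    have "(2::int) ^ i \<ge> 2 ^ (Suc k)" using 2 by (intro power_increasing) auto
    then show False using assms by auto
  qed
qed

lemma key_comb:
  fixes \<gamma> :: "nat \<Rightarrow> int" and \<mu> :: int and P :: "int \<Rightarrow> bool"
  assumes "n \<ge> 1"
    and "\<bar>\<mu>\<bar> > 3 * Max {\<bar>\<gamma> j\<bar> | j. j \<in> {1..n}}"
    and "\<And>q. P q \<Longrightarrow> \<exists>i::nat. q = 2 ^ i"
  shows "\<exists>d. \<forall>j\<in>{1..n}. P (\<mu> + \<gamma> j) \<longrightarrow> \<gamma> j = d"
proof -
  define M where "M = Max {\<bar>\<gamma> j\<bar> | j. j \<in> {1..n}}"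
  have eq: "{\<bar>\<gamma> j\<bar> | j. j \<in> {1..n}} = (\<lambda>j. \<bar>\<gamma> j\<bar>) ` {1..n}" by auto
  have bnd: "\<bar>\<gamma> j\<bar> \<le> M" if "j \<in> {1..n}" for j
    unfolding M_def eq using that by (intro Max_ge) auto
  have M0: "M \<ge> 0" using bnd[of 1] assms(1) by auto
  have mu: "\<bar>\<mu>\<bar> > 3 * M" using assms(2) M_def by simp
  have big: "\<mu> + \<gamma> j > 2 * M" if jj: "j \<in> {1..n}" "P (\<mu> + \<gamma> j)" for j
  proof -
    obtain i :: nat where "\<mu> + \<gamma> j = 2 ^ i" using assms(3) jj(2) by blast
    then have "\<mu> + \<gamma> j > 0" by simp
    then show ?thesis using bnd[OF jj(1)] mu by (auto simp: abs_if split: if_splits)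
  qed
  show ?thesis
  proof (cases "\<exists>j0\<in>{1..n}. P (\<mu> + \<gamma> j0)")
    case False then show ?thesis by blast
  next
    case True
    then obtain j0 where j0: "j0 \<in> {1..n}" "P (\<mu> + \<gamma> j0)" by blast
    show ?thesis
    proof (intro exI[of _ "\<gamma> j0"] ballI impI)
      fix j assume j: "j \<in> {1..n}" "P (\<mu> + \<gamma> j)"
      obtain i :: nat where i: "\<mu> + \<gamma> j = 2 ^ i" using assms(3) j(2) by blast
      obtain k :: nat where k: "\<mu> + \<gamma> j0 = 2 ^ k" using assms(3) j0(2) by blast
      have "\<mu> + \<gamma> j = \<mu> + \<gamma> j0"
        by (rule pow2_gap[OF i k big[OF j] big[OF j0]]) (use bnd[OF j(1)] bnd[OF j0(1)] in auto)
      then show "\<gamma> j = \<gamma> j0" by simp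
    qed
  qed
qed

theorem lemma3:
  fixes H :: "('a, 'b) monoid_scheme" and a :: "nat \<Rightarrow> 'a"
    and n :: nat and \<gamma> \<beta> :: "nat \<Rightarrow> int" and \<mu> :: int
  assumes "group H"
    and "a ` {1..} \<subseteq> carrier H"
    and "generate H (a ` {1..}) = carrier H"
    and "n \<ge> 1"
    and "\<bar>\<mu>\<bar> > 3 * Max {\<bar>\<gamma> j\<bar> | j. j \<in> {1..n}}"
    and "\<forall>i \<in> {1..n}. (\<Sum>j \<in> {j \<in> {1..n}. \<gamma> j = \<gamma> i}. \<beta> j) = 0"
  shows "fst (ordprod (wrZ (Kgrp H a)) [1..<n+1]
            (\<lambda>j. (conjg (wrZ (Kgrp H a)) (celem H a)
                     (sgen H a [^]\<^bsub>wrZ (Kgrp H a)\<^esub> \<gamma> j)) [^]\<^bsub>wrZ (Kgrp H a)\<^esub> \<beta> j))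
         \<mu> = \<one>\<^bsub>Kgrp H a\<^esub>"
proof -
  define K where "K = Kgrp H a"
  define S where "S = insert (zgen H) (bgen H a ` {1..})"
  interpret HH: group H by (rule assms(1))
  interpret WH: group "wrZ H" by (rule wrZ_group[OF assms(1)])
  have Ssub: "S \<subseteq> carrier (wrZ H)"
  proof
    fix x assume "x \<in> S"
    then consider "x = zgen H" | i where "i \<in> {1..}" "x = bgen H a i" unfolding S_def by blast
    then show "x \<in> carrier (wrZ H)"
    proof cases
      case 1 then show ?thesis by (simp add: zgen_def wrZ_carrier)
    next
      case 2
      have "a i \<in> carrier H" using assms(2) 2(1) by blast
      then show ?thesis unfolding 2(2) bgen_def wrZ_carrier by simp
    qed
  qed
  have Kc: "carrier K = generate (wrZ H) S" unfolding K_def Kgrp_def S_def by simp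
  have sg: "subgroup (generate (wrZ H) S) (wrZ H)" by (rule WH.generate_is_subgroup[OF Ssub])
  have KG: "group K"
    unfolding K_def Kgrp_def S_def[symmetric] by (rule subgroup.subgroup_is_group[OF sg WH.is_group])
  interpret K: group K by (rule KG)
  have Sin: "x \<in> carrier K" if "x \<in> S" for x unfolding Kc using that by (rule generate.incl)
  have cK: "cfun H a q \<in> carrier K" for q
  proof (cases "q = 1")
    case True
    then show ?thesis using Sin[of "zgen H"] by (simp add: cfun_def S_def)
  next
    case False
    show ?thesis
    proof (cases "\<exists>i::nat. i > 0 \<and> q = 2 ^ i")
      case True
      then obtain i :: nat where i: "i > 0" "q = 2 ^ i" by blast
      have th: "(THE i::nat. i > 0 \<and> q = 2 ^ i) = i"
      proof (rule the_equality)
        show "0 < i \<and> q = 2 ^ i" using i by simp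
        fix j :: nat assume "0 < j \<and> q = 2 ^ j"
        then have "(2::int) ^ j = 2 ^ i" using i by simp
        then show "j = i" using power_inject_exp[of "2::int" j i] by simp
      qed
      have "cfun H a q = bgen H a i" using False True th by (simp add: cfun_def)
      moreover have "bgen H a i \<in> S" using i unfolding S_def by simp
      ultimately show ?thesis using Sin by simp
    next
      case F2: False
      then have "cfun H a q = \<one>\<^bsub>K\<^esub>" unfolding cfun_def K_def by (simp only: F2 \<open>q \<noteq> 1\<close> if_False)
      then show ?thesis by simp
    qed
  qed
  have sgen_eq: "sgen H a = (\<lambda>_. \<one>\<^bsub>K\<^esub>, 1)" unfolding sgen_def K_def ..
  have cel: "celem H a = (cfun H a, 0)" unfolding celem_def ..
  have fac: "(conjg (wrZ K) (celem H a) (sgen H a [^]\<^bsub>wrZ K\<^esub> \<gamma> j)) [^]\<^bsub>wrZ K\<^esub> \<beta> j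
       = (\<lambda>x. cfun H a (x + \<gamma> j) [^]\<^bsub>K\<^esub> \<beta> j, 0)" for j
  proof -
    have "conjg (wrZ K) (celem H a) (sgen H a [^]\<^bsub>wrZ K\<^esub> \<gamma> j) = (\<lambda>x. cfun H a (x + \<gamma> j), 0)"
      unfolding sgen_eq cel by (rule conj_base[OF KG cK])
    moreover have "(\<lambda>x. cfun H a (x + \<gamma> j), 0::int) [^]\<^bsub>wrZ K\<^esub> \<beta> j = (\<lambda>x. cfun H a (x + \<gamma> j) [^]\<^bsub>K\<^esub> \<beta> j, 0)"
      using base_pow[OF KG, of "\<lambda>x. cfun H a (x + \<gamma> j)" "\<beta> j"] cK by blast
    ultimately show ?thesis by simp
  qed
  have F: "fst (ordprod (wrZ K) [1..<n+1]
            (\<lambda>j. (conjg (wrZ K) (celem H a) (sgen H a [^]\<^bsub>wrZ K\<^esub> \<gamma> j)) [^]\<^bsub>wrZ K\<^esub> \<beta> j)) \<mu>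
        = ordprod K [1..<n+1] (\<lambda>j. cfun H a (\<mu> + \<gamma> j) [^]\<^bsub>K\<^esub> \<beta> j)"
  proof -
    have "fst (ordprod (wrZ K) [1..<n+1] (\<lambda>j. (\<lambda>x. cfun H a (x + \<gamma> j) [^]\<^bsub>K\<^esub> \<beta> j, 0::int))) \<mu>
        = ordprod K [1..<n+1] (\<lambda>j. fst (\<lambda>x. cfun H a (x + \<gamma> j) [^]\<^bsub>K\<^esub> \<beta> j, 0::int) \<mu>)"
      using ordprod_base[OF KG, of "[1..<n+1]" "\<lambda>j. (\<lambda>x. cfun H a (x + \<gamma> j) [^]\<^bsub>K\<^esub> \<beta> j, 0::int)" \<mu>]
        cK by auto
    then show ?thesis unfolding fac by (simp add: add.commute)
  qed
  obtain d where d: "\<forall>j\<in>{1..n}. cfun H a (\<mu> + \<gamma> j) \<noteq> \<one>\<^bsub>K\<^esub> \<longrightarrow> \<gamma> j = d"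
    using key_comb[OF assms(4) assms(5), of "\<lambda>q. cfun H a q \<noteq> \<one>\<^bsub>K\<^esub>"] cfun_pow2[of H a] K_def by blast
  define x where "x = cfun H a (\<mu> + d)"
  define e where "e j = (if \<gamma> j = d then \<beta> j else 0)" for j
  have "ordprod K [1..<n+1] (\<lambda>j. cfun H a (\<mu> + \<gamma> j) [^]\<^bsub>K\<^esub> \<beta> j)
      = ordprod K [1..<n+1] (\<lambda>j. x [^]\<^bsub>K\<^esub> e j)"
  proof -
    have "cfun H a (\<mu> + \<gamma> j) [^]\<^bsub>K\<^esub> \<beta> j = x [^]\<^bsub>K\<^esub> e j" if "j \<in> set [1..<n+1]" for j
    proof (cases "\<gamma> j = d")
      case True then show ?thesis by (simp add: x_def e_def)
    next
      case False
      then have "cfun H a (\<mu> + \<gamma> j) = \<one>\<^bsub>K\<^esub>" using d that by auto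
      then show ?thesis using False by (simp add: e_def)
    qed
    then show ?thesis unfolding ordprod_def by (intro foldr_cong) auto
  qed
  also have "\<dots> = x [^]\<^bsub>K\<^esub> (\<Sum>j\<leftarrow>[1..<n+1]. e j)" by (rule ordprod_pow[OF KG]) (simp add: x_def cK)
  also have "(\<Sum>j\<leftarrow>[1..<n+1]. e j) = 0"
  proof -
    have "(\<Sum>j\<leftarrow>[1..<n+1]. e j) = (\<Sum>j\<in>{1..n}. e j)"
      by (simp only: sum_list_distinct_conv_sum_set distinct_upt set_upt) (metis Suc_eq_plus1 atLeastLessThanSuc_atLeastAtMost)
    also have "\<dots> = (\<Sum>j\<in>{j \<in> {1..n}. \<gamma> j = d}. \<beta> j)"
      unfolding e_def by (simp add: sum.inter_filter[symmetric])
    also have "\<dots> = 0"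
    proof (cases "\<exists>i\<in>{1..n}. \<gamma> i = d")
      case True
      then obtain i where "i \<in> {1..n}" "\<gamma> i = d" by blast
      then show ?thesis using assms(6) by force
    next
      case False
      then have "{j \<in> {1..n}. \<gamma> j = d} = {}" by auto
      then show ?thesis by (metis sum.empty)
    qed
    finally show ?thesis .
  qed
  finally show ?thesis using F by (simp add: K_def)
qed

end
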